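(* Let $\Bbbk$ be a field, $S=\Bbbk[x,y,z]$, $\mathfrak m=(x,y,z)$, and let $I\subseteq S$ be a monomial ideal generated in degree $d$. Then $I$ has a bad configuration in $\Delta(d)$ if and only if the socle $0:_{S/I}\mathfrak m$ of $S/I$ contains (the image of) a monomial of degree at least $d$.
   Context: For a monomial $f\in S$, its $d$-shadow is the set of all monomials of degree $d$ dividing $f$. Let $\mathcal G(I)$ denote the minimal monomial generating set of $I$. $I$ (generated in degree $d$) is said to have a bad configuration in $\Delta(d)$ if there exists a nonempty set $M$ of degree-$d$ monomials not belonging to $I$ such that (i) $M$ is the $d$-shadow of some monomial $f\in S$, and (ii) each of the $d$-shadows of $fx$, $fy$ and $fz$ has nonempty intersection with $\mathcal G(I)$. Here $\Delta(d)$ denotes the dual graph of $\mathfrak m^d$ (vertices: degree-$d$ monomials). *)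

theory Defs
  imports Main "HOL-Library.Poly_Mapping" "HOL-Library.Product_Plus"
begin

text \<open>Monomials of S = k[x,y,z] are exponent triples (a,b,c) standing for x^a y^b z^c;
  the polynomial ring S is the ring of finitely supported functions from
  monomials to the field k (convolution product), i.e. (nat*nat*nat) =>0 'k.\<close>

type_synonym mon = "nat \<times> nat \<times> nat"
type_synonym 'k mpoly3 = "mon \<Rightarrow>\<^sub>0 'k"

definition mdeg :: "mon \<Rightarrow> nat" where
  "mdeg m = fst m + fst (snd m) + snd (snd m)"

definition monom :: "mon \<Rightarrow> 'k::field mpoly3" where
  "monom m = Poly_Mapping.single m 1"

definition varX :: mon where "varX = (1, 0, 0)"
definition varY :: mon where "varY = (0, 1, 0)"
definition varZ :: mon where "varZ = (0, 0, 1)"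

definition ideal_gen :: "'k::field mpoly3 set \<Rightarrow> 'k mpoly3 set" where
  "ideal_gen G = {p. \<exists>F r. finite F \<and> F \<subseteq> G \<and> p = (\<Sum>g\<in>F. r g * g)}"

definition max_ideal :: "'k::field mpoly3 set" where
  "max_ideal = ideal_gen {monom varX, monom varY, monom varZ}"

definition monomial_ideal_gen_in_degree :: "nat \<Rightarrow> 'k::field mpoly3 set \<Rightarrow> bool" where
  "monomial_ideal_gen_in_degree d I \<longleftrightarrow>
     (\<exists>G. (\<forall>m\<in>G. mdeg m = d) \<and> I = ideal_gen (monom ` G))"

definition min_mon_gens :: "'k::field mpoly3 set \<Rightarrow> mon set" where
  "min_mon_gens I = {m. monom m \<in> I \<and>
      (\<forall>m'. monom m' \<in> I \<and> (monom m' :: 'k mpoly3) dvd monom m \<longrightarrow> m' = m)}"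

definition shadow :: "'k::field itself \<Rightarrow> nat \<Rightarrow> mon \<Rightarrow> mon set" where
  "shadow _ d f = {m. mdeg m = d \<and> (monom m :: 'k mpoly3) dvd monom f}"

definition bad_configuration :: "nat \<Rightarrow> 'k::field mpoly3 set \<Rightarrow> bool" where
  "bad_configuration d I \<longleftrightarrow>
     (\<exists>M. M \<noteq> {} \<and> (\<forall>m\<in>M. mdeg m = d \<and> monom m \<notin> I) \<and>
        (\<exists>f. M = shadow TYPE('k) d f \<and>
             shadow TYPE('k) d (f + varX) \<inter> min_mon_gens I \<noteq> {} \<and>
             shadow TYPE('k) d (f + varY) \<inter> min_mon_gens I \<noteq> {} \<and>
             shadow TYPE('k) d (f + varZ) \<inter> min_mon_gens I \<noteq> {}))"

definition in_socle :: "'k::field mpoly3 set \<Rightarrow> 'k mpoly3 \<Rightarrow> bool" where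
  "in_socle I u \<longleftrightarrow> (\<forall>p\<in>max_ideal. u * p \<in> I)"

end

theory Submission
  imports Defs
begin

definition mle :: "mon \<Rightarrow> mon \<Rightarrow> bool" where
  "mle a b \<longleftrightarrow> (\<exists>c. b = a + c)"

lemma monom_mult: "(monom a :: 'k::field mpoly3) * monom b = monom (a + b)"
  by (simp add: monom_def mult_single)

lemma keys_monom: "Poly_Mapping.keys (monom a :: 'k::field mpoly3) = {a}"
  by (simp add: monom_def)

lemma key_lemma:
  fixes q :: "'k::field mpoly3"
  assumes "Poly_Mapping.lookup (q * monom g) u \<noteq> 0"
  shows "mle g u"
proof -
  have "u \<in> Poly_Mapping.keys (q * monom g)" using assms by (simp add: in_keys_iff)
  then have "u \<in> {a + b | a b. a \<in> Poly_Mapping.keys q \<and> b \<in> Poly_Mapping.keys (monom g :: 'k mpoly3)}"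
    using keys_mult by blast
  then show ?thesis by (auto simp: keys_monom mle_def add.commute)
qed

lemma dvd_iff: "((monom m :: 'k::field mpoly3) dvd monom f) \<longleftrightarrow> mle m f"
proof
  assume "(monom m :: 'k::field mpoly3) dvd monom f"
  then obtain q :: "'k mpoly3" where q: "monom f = monom m * q" by (auto elim: dvdE)
  have qq: "q * monom m = monom f" using q by (simp add: mult.commute)
  have "Poly_Mapping.lookup (q * monom m) f \<noteq> 0" unfolding qq by (simp add: monom_def)
  then show "mle m f" by (rule key_lemma)
next
  assume "mle m f"
  then obtain c where "f = m + c" by (auto simp: mle_def)
  then have "monom f = (monom m :: 'k mpoly3) * monom c" by (simp add: monom_mult)
  then show "(monom m :: 'k mpoly3) dvd monom f" by simp
qed

lemma ideal_gen_mem: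
  fixes G :: "mon set"
  shows "((monom u :: 'k::field mpoly3) \<in> ideal_gen (monom ` G)) \<longleftrightarrow> (\<exists>g\<in>G. mle g u)"
proof
  assume "(monom u :: 'k::field mpoly3) \<in> ideal_gen (monom ` G)"
  then obtain F r where F: "finite F" "F \<subseteq> monom ` G" "(monom u :: 'k mpoly3) = (\<Sum>g\<in>F. r g * g)"
    unfolding ideal_gen_def by blast
  have "Poly_Mapping.lookup (\<Sum>g\<in>F. r g * g) u = (1::'k)"
    unfolding F(3)[symmetric] by (simp add: monom_def)
  then have "(\<Sum>g\<in>F. Poly_Mapping.lookup (r g * g) u) \<noteq> 0" by (simp add: lookup_sum)
  then obtain h where h: "h \<in> F" "Poly_Mapping.lookup (r h * h) u \<noteq> 0"
    using sum.not_neutral_contains_not_neutral by blast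
  then obtain g where g: "g \<in> G" "h = monom g" using F(2) by blast
  have "Poly_Mapping.lookup (r h * monom g) u \<noteq> 0" using h(2) g(2) by simp
  then have "mle g u" by (rule key_lemma)
  then show "\<exists>g\<in>G. mle g u" using g by blast
next
  assume "\<exists>g\<in>G. mle g u"
  then obtain g c where g: "g \<in> G" "u = g + c" by (auto simp: mle_def)
  have "(monom u :: 'k mpoly3) = (\<Sum>h\<in>{monom g}. (\<lambda>_. monom c) h * h)"
    using g by (simp add: monom_mult add.commute)
  moreover have "{monom g} \<subseteq> (monom ` G :: 'k mpoly3 set)" using g(1) by blast
  ultimately show "(monom u :: 'k mpoly3) \<in> ideal_gen (monom ` G)"
    
    by (auto simp: ideal_gen_def intro!: exI[of _ "{monom g}"] exI[of _ "\<lambda>_. monom c"])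
qed

lemma ideal_gen_mult:
  assumes "p \<in> ideal_gen G" shows "q * p \<in> ideal_gen G"
proof -
  obtain F r where F: "finite F" "F \<subseteq> G" "p = (\<Sum>g\<in>F. r g * g)"
    using assms unfolding ideal_gen_def by blast
  have "q * p = (\<Sum>g\<in>F. (q * r g) * g)"
    using F(3) by (simp add: sum_distrib_left mult.assoc)
  then show ?thesis using F
    by (auto simp: ideal_gen_def intro!: exI[of _ F] exI[of _ "\<lambda>g. q * r g"])
qed

lemma ideal_gen_zero: "0 \<in> ideal_gen G"
  unfolding ideal_gen_def by (rule CollectI, rule exI[of _ "{}"]) auto

lemma ideal_gen_add:
  assumes "p1 \<in> ideal_gen G" "p2 \<in> ideal_gen G" shows "p1 + p2 \<in> ideal_gen G"
proof -
  obtain F1 r1 where F1: "finite F1" "F1 \<subseteq> G" "p1 = (\<Sum>g\<in>F1. r1 g * g)"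
    using assms(1) unfolding ideal_gen_def by blast
  obtain F2 r2 where F2: "finite F2" "F2 \<subseteq> G" "p2 = (\<Sum>g\<in>F2. r2 g * g)"
    using assms(2) unfolding ideal_gen_def by blast
  define r where "r g = (if g \<in> F1 then r1 g else 0) + (if g \<in> F2 then r2 g else 0)" for g
  have e1: "(\<Sum>g\<in>F1 \<union> F2. (if g \<in> F1 then r1 g else 0) * g) = p1"
    unfolding F1(3) by (rule sum.mono_neutral_cong_right) (use F1 F2 in auto)
  have e2: "(\<Sum>g\<in>F1 \<union> F2. (if g \<in> F2 then r2 g else 0) * g) = p2"
    unfolding F2(3) by (rule sum.mono_neutral_cong_right) (use F1 F2 in auto)
  have "p1 + p2 = (\<Sum>g\<in>F1 \<union> F2. r g * g)"
    unfolding r_def distrib_right sum.distrib e1 e2 by simp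
  then show ?thesis using F1 F2
    by (auto simp: ideal_gen_def intro!: exI[of _ "F1 \<union> F2"] exI[of _ r])
qed

lemma ideal_gen_sum:
  assumes "finite F" "\<And>x. x \<in> F \<Longrightarrow> f x \<in> ideal_gen G"
  shows "sum f F \<in> ideal_gen G"
  using assms by (induction F rule: finite_induct) (auto intro: ideal_gen_zero ideal_gen_add)

lemma ideal_gen_base: "g \<in> G \<Longrightarrow> g \<in> ideal_gen G"
proof -
  assume "g \<in> G"
  have "g = (\<Sum>h\<in>{g}. (\<lambda>_. 1) h * h)" by simp
  then show ?thesis using \<open>g \<in> G\<close>
    by (auto simp: ideal_gen_def intro!: exI[of _ "{g}"] exI[of _ "\<lambda>_. 1"])
qed

lemma mdeg_add: "mdeg (a + b) = mdeg a + mdeg b"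
  by (cases a; cases b) (auto simp: mdeg_def)

lemma mdeg_zero: "mdeg c = 0 \<Longrightarrow> c = 0"
  by (cases c) (auto simp: mdeg_def zero_prod_def)

lemma mle_refl: "mle a a"
  unfolding mle_def by (rule exI[of _ 0]) simp

lemma mle_trans: "mle a b \<Longrightarrow> mle b c \<Longrightarrow> mle a c"
  by (auto simp: mle_def add.assoc)

lemma exists_sub:
  assumes "mdeg u \<ge> d" shows "\<exists>m. mdeg m = d \<and> mle m u"
proof -
  obtain a b c where u: "u = (a, b, c)" by (cases u) auto
  define a' where "a' = min a d"
  define b' where "b' = min b (d - a')"
  define c' where "c' = d - a' - b'"
  have le: "a' \<le> a" "b' \<le> b" "c' \<le> c" using assms
    by (auto simp: a'_def b'_def c'_def u mdeg_def)
  have "u = (a', b', c') + (a - a', b - b', c - c')" using le u by simp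
  moreover have "mdeg (a', b', c') = d" using assms
    by (auto simp: a'_def b'_def c'_def u mdeg_def)
  ultimately show ?thesis unfolding mle_def by blast
qed

theorem mainTheorem3:
  fixes I :: "'k::field mpoly3 set" and d :: nat
  assumes "monomial_ideal_gen_in_degree d I"
  shows "bad_configuration d I \<longleftrightarrow>
         (\<exists>u. mdeg u \<ge> d \<and> monom u \<notin> I \<and> in_socle I (monom u))"
proof -
  obtain G where G: "\<forall>m\<in>G. mdeg m = d" "I = ideal_gen (monom ` G)"
    using assms unfolding monomial_ideal_gen_in_degree_def by blast
  have memI: "(monom u \<in> I) \<longleftrightarrow> (\<exists>g\<in>G. mle g u)" for u
    unfolding G(2) by (rule ideal_gen_mem)
  have sh: "(m \<in> shadow TYPE('k) d f) \<longleftrightarrow> (mdeg m = d \<and> mle m f)" for m f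
    by (simp add: shadow_def dvd_iff)
  have mmg: "monom m \<in> I" if "m \<in> min_mon_gens I" for m
    using that by (simp add: min_mon_gens_def)
  have G_sub: "m \<in> min_mon_gens I" if m: "m \<in> G" for m
  proof -
    have mI: "monom m \<in> I" using memI[of m] m mle_refl[of m] by blast
    have "m' = m" if mm: "monom m' \<in> I" "(monom m' :: 'k mpoly3) dvd monom m" for m'
    proof -
      obtain g where g: "g \<in> G" "mle g m'" using mm(1) memI[of m'] by blast
      have "mle m' m" using mm(2) by (simp add: dvd_iff)
      then obtain c2 where c2: "m = m' + c2" unfolding mle_def by blast
      obtain c1 where c1: "m' = g + c1" using g(2) unfolding mle_def by blast
      have "mdeg m = mdeg g + mdeg c1 + mdeg c2" unfolding c2 c1 mdeg_add by simp
      moreover have "mdeg m = d" "mdeg g = d" using G(1) g(1) m by auto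
      ultimately have "mdeg c2 = 0" by simp
      then have "c2 = 0" by (rule mdeg_zero)
      then show "m' = m" using c2 by simp
    qed
    then show ?thesis using mI unfolding min_mon_gens_def by blast
  qed
  have socle: "in_socle I (monom u) \<longleftrightarrow>
      (monom (u + varX) \<in> I \<and> monom (u + varY) \<in> I \<and> monom (u + varZ) \<in> I)" for u
  proof
    assume s: "in_socle I (monom u)"
    have mx: "monom v \<in> (max_ideal :: 'k mpoly3 set)" if "v \<in> {varX, varY, varZ}" for v
      unfolding max_ideal_def using that by (intro ideal_gen_base) blast
    have "monom u * monom v \<in> I" if "v \<in> {varX, varY, varZ}" for v
      using s mx[OF that] unfolding in_socle_def by blast
    then show "monom (u + varX) \<in> I \<and> monom (u + varY) \<in> I \<and> monom (u + varZ) \<in> I"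
      by (simp add: monom_mult)
  next
    assume h: "monom (u + varX) \<in> I \<and> monom (u + varY) \<in> I \<and> monom (u + varZ) \<in> I"
    show "in_socle I (monom u)" unfolding in_socle_def
    proof
      fix p :: "'k mpoly3" assume "p \<in> max_ideal"
      then obtain F r where F: "finite F" "F \<subseteq> {monom varX, monom varY, monom varZ}"
        "p = (\<Sum>g\<in>F. r g * g)" unfolding max_ideal_def ideal_gen_def by blast
      have "monom u * p = (\<Sum>g\<in>F. r g * (monom u * g))"
        using F(3) by (simp add: sum_distrib_left ac_simps)
      moreover have "(\<Sum>g\<in>F. r g * (monom u * g)) \<in> I"
        unfolding G(2)
      proof (rule ideal_gen_sum)
        show "finite F" by fact
        fix g assume "g \<in> F"
        then have "g \<in> {monom varX, monom varY, monom varZ}" using F(2) by blast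
        then have "monom u * g \<in> I" using h by (auto simp: monom_mult)
        then show "r g * (monom u * g) \<in> ideal_gen (monom ` G)"
          unfolding G(2) by (rule ideal_gen_mult)
      qed
      ultimately show "monom u * p \<in> I" by simp
    qed
  qed
  show ?thesis
  proof
    assume "bad_configuration d I"
    then obtain M f where M: "M \<noteq> {}" "\<forall>m\<in>M. mdeg m = d \<and> monom m \<notin> I"
      "M = shadow TYPE('k) d f"
      "shadow TYPE('k) d (f + varX) \<inter> min_mon_gens I \<noteq> {}"
      "shadow TYPE('k) d (f + varY) \<inter> min_mon_gens I \<noteq> {}"
      "shadow TYPE('k) d (f + varZ) \<inter> min_mon_gens I \<noteq> {}"
      unfolding bad_configuration_def by blast
    obtain m where "m \<in> M" using M(1) by blast
    then have m: "mdeg m = d" "mle m f" using M(3) sh by auto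
    then obtain c where c: "f = m + c" unfolding mle_def by blast
    have f1: "mdeg f \<ge> d" using m(1) unfolding c mdeg_add by simp
    have f2: "monom f \<notin> I"
    proof
      assume "monom f \<in> I"
      then obtain g where g: "g \<in> G" "mle g f" using memI[of f] by blast
      have "mdeg g = d" using G(1) g(1) by blast
      then have "g \<in> M" using M(3) sh g(2) by simp
      moreover have "monom g \<in> I" using memI[of g] g mle_refl[of g] by blast
      ultimately show False using M(2) by blast
    qed
    have f3: "monom (f + v) \<in> I"
      if ne: "shadow TYPE('k) d (f + v) \<inter> min_mon_gens I \<noteq> {}" for v
    proof -
      obtain m where m1: "m \<in> shadow TYPE('k) d (f + v)" and m2: "m \<in> min_mon_gens I"
        using ne by blast
      have "mle m (f + v)" using m1 sh by simp
      moreover obtain g where "g \<in> G" "mle g m" using mmg[OF m2] memI[of m] by blast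
      ultimately show ?thesis using memI[of "f + v"] mle_trans by blast
    qed
    have "in_socle I (monom f)" using socle[of f] f3 M(4,5,6) by blast
    then show "\<exists>u. mdeg u \<ge> d \<and> monom u \<notin> I \<and> in_socle I (monom u)"
      using f1 f2 by blast
  next
    assume "\<exists>u. mdeg u \<ge> d \<and> monom u \<notin> I \<and> in_socle I (monom u)"
    then obtain u where u: "mdeg u \<ge> d" "monom u \<notin> I" "in_socle I (monom u)" by blast
    define M where "M = shadow TYPE('k) d u"
    obtain m0 where "mdeg m0 = d" "mle m0 u" using exists_sub[OF u(1)] by blast
    then have "m0 \<in> M" unfolding M_def sh by simp
    then have b1: "M \<noteq> {}" by blast
    have b2: "\<forall>m\<in>M. mdeg m = d \<and> monom m \<notin> I"
    proof
      fix m assume "m \<in> M"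
      then have m: "mdeg m = d" "mle m u" unfolding M_def sh by auto
      have "monom m \<notin> I"
      proof
        assume "monom m \<in> I"
        then obtain g where "g \<in> G" "mle g m" using memI[of m] by blast
        then have "monom u \<in> I" using memI[of u] mle_trans m(2) by blast
        then show False using u(2) by blast
      qed
      then show "mdeg m = d \<and> monom m \<notin> I" using m by blast
    qed
    have b3: "shadow TYPE('k) d (u + v) \<inter> min_mon_gens I \<noteq> {}"
      if uv: "monom (u + v) \<in> I" for v
    proof -
      obtain g where g: "g \<in> G" "mle g (u + v)" using uv memI[of "u + v"] by blast
      have "mdeg g = d" using G(1) g(1) by blast
      then have "g \<in> shadow TYPE('k) d (u + v)" using g(2) sh by simp
      moreover have "g \<in> min_mon_gens I" using G_sub g(1) .
      ultimately show ?thesis by blast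
    qed
    have "monom (u + varX) \<in> I" "monom (u + varY) \<in> I" "monom (u + varZ) \<in> I"
      using socle[of u] u(3) by auto
    then have "shadow TYPE('k) d (u + varX) \<inter> min_mon_gens I \<noteq> {}"
      "shadow TYPE('k) d (u + varY) \<inter> min_mon_gens I \<noteq> {}"
      "shadow TYPE('k) d (u + varZ) \<inter> min_mon_gens I \<noteq> {}" using b3 by auto
    then show "bad_configuration d I"
      unfolding bad_configuration_def using b1 b2 M_def by blast
  qed
qed

end
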